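(* Suppose that a domain $\Omega\subset E_k$ is convex with respect to the set of directions $M_u$ and $f_u(E_k)=\mathbb{C}$ for all $u=1,\ldots,m$. Suppose that $\Phi:\Omega\to\mathbb{A}_n^m$ is monogenic in $\Omega$. If $\zeta_1,\zeta_2\in\Omega$ and $\zeta_2-\zeta_1\in M_u$ for some $u\in\{1,\ldots,m\}$, then $\Phi(\zeta_2)-\Phi(\zeta_1)\in\mathcal{I}_u$.
   Context: Fix integers $1\le m\le n$. $\mathbb{A}_n^m$ is an $n$-dimensional commutative associative algebra with unit over $\mathbb{C}$ having a basis $\{I_r\}_{r=1}^n$ with the multiplication rules: (1) for $r,s\in\{1,\ldots,m\}$: $I_rI_s=0$ if $r\ne s$ and $I_rI_r=I_r$; (2) for $r,s\in\{m+1,\ldots,n\}$: $I_rI_s=\sum_{p=\max\{r,s\}+1}^n\Upsilon^s_{r,p}I_p$ with $\Upsilon^s_{r,p}\in\mathbb{C}$; (3) for each $s\in\{m+1,\ldots,n\}$ there is a unique $u_s\in\{1,\ldots,m\}$ such that for all $r\in\{1,\ldots,m\}$: $I_rI_s=I_s$ if $r=u_s$ and $I_rI_s=0$ otherwise. The unit is $\sum_{u=1}^mI_u$. For $u=1,\ldots,m$, $\mathcal{I}_u=\{\sum_{r\ne u}\lambda_rI_r:\lambda_r\in\mathbb{C}\}$ is a maximal ideal and $f_u:\mathbb{A}_n^m\to\mathbb{C}$ is the linear functional $f_u(\sum_r\lambda_rI_r)=\lambda_u$. Let $2\le k\le 2n$ and let $e_1=1$, $e_j=\sum_{r=1}^n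 a_{jr}I_r$ ($j=2,\ldots,k$) be linearly independent over $\mathbb{R}$; $E_k$ is their real linear span, $\zeta=\sum_j x_je_j$ with $x_j\in\mathbb{R}$. $M_u:=\{\zeta\in E_k: f_u(\zeta)=0\}$. A domain $\Omega\subset E_k$ is convex with respect to the set of directions $M_u$ if for all $\zeta_1,\zeta_2\in\Omega$ with $\zeta_2-\zeta_1\in M_u$ the segment $\{\zeta_1+\alpha(\zeta_2-\zeta_1):\alpha\in[0,1]\}$ lies in $\Omega$. A continuous function $\Phi:\Omega\to\mathbb{A}_n^m$ is monogenic in $\Omega$ if for every $\zeta\in\Omega$ there is $\Phi'(\zeta)\in\mathbb{A}_n^m$ with $\lim_{\varepsilon\to0^+}(\Phi(\zeta+\varepsilon h)-\Phi(\zeta))\varepsilon^{-1}=h\Phi'(\zeta)$ for all $h\in E_k$ (Gateaux derivative). *)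

theory Defs
  imports "HOL-Analysis.Analysis"
begin

text \<open>Elements of the algebra A_n^m are coefficient functions nat => complex
  (coefficient of the basis vector I_r at index r), vanishing outside 1..n.
  The topology used is the product topology on nat => complex, which on the
  finite-dimensional set of such functions is the Euclidean topology.
  Y r s p stands for Upsilon^s_{r,p}; us s stands for u_s.\<close>

definition alg_carrier :: "nat \<Rightarrow> (nat \<Rightarrow> complex) set" where
  "alg_carrier n = {a. \<forall>p. p \<notin> {1..n} \<longrightarrow> a p = 0}"

definition basis_coeff ::
  "nat \<Rightarrow> nat \<Rightarrow> (nat \<Rightarrow> nat \<Rightarrow> nat \<Rightarrow> complex) \<Rightarrow> (nat \<Rightarrow> nat) \<Rightarrow> nat \<Rightarrow> nat \<Rightarrow> nat \<Rightarrow> complex" where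
  "basis_coeff n m Y us r s p =
     (if r \<le> m \<and> s \<le> m then (if r = s \<and> p = r then 1 else 0)
      else if m < r \<and> m < s then (if max r s < p \<and> p \<le> n then Y r s p else 0)
      else if r \<le> m then (if r = us s \<and> p = s then 1 else 0)
      else (if s = us r \<and> p = r then 1 else 0))"

definition alg_mult ::
  "nat \<Rightarrow> nat \<Rightarrow> (nat \<Rightarrow> nat \<Rightarrow> nat \<Rightarrow> complex) \<Rightarrow> (nat \<Rightarrow> nat) \<Rightarrow>
   (nat \<Rightarrow> complex) \<Rightarrow> (nat \<Rightarrow> complex) \<Rightarrow> (nat \<Rightarrow> complex)" where
  "alg_mult n m Y us a b = (\<lambda>p. if p \<in> {1..n} then
      (\<Sum>r\<in>{1..n}. \<Sum>s\<in>{1..n}. a r * b s * basis_coeff n m Y us r s p) else 0)"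

definition alg_unit :: "nat \<Rightarrow> (nat \<Rightarrow> complex)" where
  "alg_unit m = (\<lambda>p. if 1 \<le> p \<and> p \<le> m then 1 else 0)"

definition is_Anm :: "nat \<Rightarrow> nat \<Rightarrow> (nat \<Rightarrow> nat \<Rightarrow> nat \<Rightarrow> complex) \<Rightarrow> (nat \<Rightarrow> nat) \<Rightarrow> bool" where
  "is_Anm n m Y us \<longleftrightarrow> 1 \<le> m \<and> m \<le> n \<and>
     (\<forall>s\<in>{m+1..n}. us s \<in> {1..m}) \<and>
     (\<forall>a b. alg_mult n m Y us a b = alg_mult n m Y us b a) \<and>
     (\<forall>a b c. alg_mult n m Y us (alg_mult n m Y us a b) c =
              alg_mult n m Y us a (alg_mult n m Y us b c))"

definition f_fun :: "nat \<Rightarrow> (nat \<Rightarrow> complex) \<Rightarrow> complex" where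
  "f_fun u a = a u"

definition ideal_I :: "nat \<Rightarrow> nat \<Rightarrow> (nat \<Rightarrow> complex) set" where
  "ideal_I n u = {a \<in> alg_carrier n. a u = 0}"

definition lin_comb :: "nat \<Rightarrow> (nat \<Rightarrow> nat \<Rightarrow> complex) \<Rightarrow> (nat \<Rightarrow> real) \<Rightarrow> (nat \<Rightarrow> complex)" where
  "lin_comb k e x = (\<lambda>p. \<Sum>j\<in>{1..k}. complex_of_real (x j) * e j p)"

definition E_span :: "nat \<Rightarrow> (nat \<Rightarrow> nat \<Rightarrow> complex) \<Rightarrow> (nat \<Rightarrow> complex) set" where
  "E_span k e = {lin_comb k e x | x. True}"

definition M_dir :: "nat \<Rightarrow> (nat \<Rightarrow> nat \<Rightarrow> complex) \<Rightarrow> nat \<Rightarrow> (nat \<Rightarrow> complex) set" where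
  "M_dir k e u = {\<zeta> \<in> E_span k e. f_fun u \<zeta> = 0}"

definition convex_wrt :: "(nat \<Rightarrow> complex) set \<Rightarrow> (nat \<Rightarrow> complex) set \<Rightarrow> bool" where
  "convex_wrt \<Omega> M \<longleftrightarrow> (\<forall>\<zeta>1\<in>\<Omega>. \<forall>\<zeta>2\<in>\<Omega>. (\<lambda>p. \<zeta>2 p - \<zeta>1 p) \<in> M \<longrightarrow>
      (\<forall>\<alpha>\<in>{0..1::real}. (\<lambda>p. \<zeta>1 p + complex_of_real \<alpha> * (\<zeta>2 p - \<zeta>1 p)) \<in> \<Omega>))"

definition is_domain_in :: "(nat \<Rightarrow> complex) set \<Rightarrow> (nat \<Rightarrow> complex) set \<Rightarrow> bool" where
  "is_domain_in E \<Omega> \<longleftrightarrow> \<Omega> \<subseteq> E \<and> \<Omega> \<noteq> {} \<and> openin (top_of_set E) \<Omega> \<and> connected \<Omega>"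

text \<open>Monogenic (Gateaux differentiable) functions Omega -> A_n^m.
  The limit in A_n^m is taken coordinatewise (A_n^m is finite dimensional).\<close>
definition monogenic ::
  "nat \<Rightarrow> nat \<Rightarrow> (nat \<Rightarrow> nat \<Rightarrow> nat \<Rightarrow> complex) \<Rightarrow> (nat \<Rightarrow> nat) \<Rightarrow> nat \<Rightarrow> (nat \<Rightarrow> nat \<Rightarrow> complex)
   \<Rightarrow> (nat \<Rightarrow> complex) set \<Rightarrow> ((nat \<Rightarrow> complex) \<Rightarrow> (nat \<Rightarrow> complex)) \<Rightarrow> bool" where
  "monogenic n m Y us k e \<Omega> \<Phi> \<longleftrightarrow>
     (\<forall>\<zeta>\<in>\<Omega>. \<Phi> \<zeta> \<in> alg_carrier n) \<and> continuous_on \<Omega> \<Phi> \<and>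
     (\<forall>\<zeta>\<in>\<Omega>. \<exists>d \<in> alg_carrier n. \<forall>h\<in>E_span k e. \<forall>p.
        ((\<lambda>\<epsilon>::real. (\<Phi> (\<lambda>q. \<zeta> q + complex_of_real \<epsilon> * h q) p - \<Phi> \<zeta> p) / complex_of_real \<epsilon>)
          \<longlongrightarrow> alg_mult n m Y us h d p) (at_right 0))"

end

theory Submission
  imports Defs
begin

lemma mult_u_zero:
  assumes "u \<in> {1..m}" "m \<le> n" "a u = 0"
  shows "alg_mult n m Y us a d u = 0"
proof -
  have "a r * d s * basis_coeff n m Y us r s u = 0" for r s
    using assms by (cases "r = u") (auto simp: basis_coeff_def)
  thus ?thesis unfolding alg_mult_def by (simp add: sum.neutral)
qed

lemma neg_span: "h \<in> E_span k e \<Longrightarrow> (\<lambda>q. - h q) \<in> E_span k e"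
proof -
  assume "h \<in> E_span k e"
  then obtain x where "h = lin_comb k e x" by (auto simp: E_span_def)
  hence "(\<lambda>q. - h q) = lin_comb k e (\<lambda>j. - x j)"
    by (auto simp: lin_comb_def sum_negf[symmetric])
  thus ?thesis by (auto simp: E_span_def)
qed

theorem lemma2:
  fixes n m k :: nat
    and Y :: "nat \<Rightarrow> nat \<Rightarrow> nat \<Rightarrow> complex"
    and us :: "nat \<Rightarrow> nat"
    and e :: "nat \<Rightarrow> nat \<Rightarrow> complex"
    and \<Omega> :: "(nat \<Rightarrow> complex) set"
    and \<Phi> :: "(nat \<Rightarrow> complex) \<Rightarrow> (nat \<Rightarrow> complex)"
    and \<zeta>1 \<zeta>2 :: "nat \<Rightarrow> complex"
    and u :: nat
  assumes alg: "is_Anm n m Y us"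
    and k_bounds: "2 \<le> k" "k \<le> 2 * n"
    and e1: "e 1 = alg_unit m"
    and e_in: "\<forall>j\<in>{1..k}. e j \<in> alg_carrier n"
    and e_indep: "\<forall>x. lin_comb k e x = (\<lambda>p. 0) \<longrightarrow> (\<forall>j\<in>{1..k}. x j = 0)"
    and dom: "is_domain_in (E_span k e) \<Omega>"
    and conv: "\<forall>v\<in>{1..m}. convex_wrt \<Omega> (M_dir k e v)"
    and surj_f: "\<forall>v\<in>{1..m}. f_fun v ` E_span k e = UNIV"
    and mono: "monogenic n m Y us k e \<Omega> \<Phi>"
    and z1: "\<zeta>1 \<in> \<Omega>" and z2: "\<zeta>2 \<in> \<Omega>"
    and u: "u \<in> {1..m}"
    and diff: "(\<lambda>p. \<zeta>2 p - \<zeta>1 p) \<in> M_dir k e u"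
  shows "(\<lambda>p. \<Phi> \<zeta>2 p - \<Phi> \<zeta>1 p) \<in> ideal_I n u"
proof -
  define h where "h = (\<lambda>p. \<zeta>2 p - \<zeta>1 p)"
  define z where "z = (\<lambda>t::real. \<lambda>p. \<zeta>1 p + complex_of_real t * h p)"
  define g where "g = (\<lambda>t. \<Phi> (z t) u)"
  have mn: "m \<le> n" using alg by (simp add: is_Anm_def)
  have hE: "h \<in> E_span k e" and hu: "h u = 0"
    using diff by (auto simp: h_def M_dir_def f_fun_def)
  have nhE: "(\<lambda>q. - h q) \<in> E_span k e" using neg_span[OF hE] .
  have zin: "z t \<in> \<Omega>" if "t \<in> {0..1}" for t
    using conv u z1 z2 diff that unfolding convex_wrt_def z_def h_def by blast
  have contPhi: "continuous_on \<Omega> \<Phi>" using mono by (simp add: monogenic_def)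
  have contz: "continuous_on {0..1} z"
    unfolding z_def by (intro continuous_on_coordinatewise_then_product continuous_intros)
  have contg: "continuous_on {0..1} g"
  proof -
    have "continuous_on {0..1} (\<Phi> \<circ> z)"
      by (rule continuous_on_compose[OF contz continuous_on_subset[OF contPhi]]) (use zin in auto)
    thus ?thesis unfolding g_def
      using continuous_on_product_then_coordinatewise[of "{0..1}" "\<Phi> \<circ> z" u] by (simp add: o_def)
  qed
  have der: "(g has_derivative (\<lambda>h. 0)) (at x within {0..1})" if x: "x \<in> {0..1} - {0,1}" for x
  proof -
    have xin: "z x \<in> \<Omega>" using x zin by auto
    then obtain d where d: "d \<in> alg_carrier n" and
      lim: "\<And>h' p. h' \<in> E_span k e \<Longrightarrow> ((\<lambda>\<epsilon>::real. (\<Phi> (\<lambda>q. z x q + complex_of_real \<epsilon> * h' q) p - \<Phi> (z x) p) / complex_of_real \<epsilon>)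
          \<longlongrightarrow> alg_mult n m Y us h' d p) (at_right 0)"
      using mono unfolding monogenic_def by blast
    define R where "R = (\<lambda>\<epsilon>::real. (g (x + \<epsilon>) - g x) / complex_of_real \<epsilon>)"
    have shift1: "z (x + \<epsilon>) = (\<lambda>q. z x q + complex_of_real \<epsilon> * h q)" for \<epsilon>
      by (auto simp: z_def algebra_simps)
    have shift2: "z (x + - \<epsilon>) = (\<lambda>q. z x q + complex_of_real \<epsilon> * - h q)" for \<epsilon>
      by (auto simp: z_def algebra_simps)
    have r: "(R \<longlongrightarrow> 0) (at_right 0)"
      using lim[OF hE, of u] mult_u_zero[OF u mn, of h, OF hu]
      unfolding R_def g_def shift1 by simp
    have "((\<lambda>\<epsilon>. - ((\<Phi> (\<lambda>q. z x q + complex_of_real \<epsilon> * - h q) u - \<Phi> (z x) u) / complex_of_real \<epsilon>))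
           \<longlongrightarrow> - 0) (at_right 0)"
      using lim[OF nhE, of u] mult_u_zero[OF u mn, of "\<lambda>q. - h q"] hu
      by (intro tendsto_minus) simp
    moreover have "R (- \<epsilon>) = - ((\<Phi> (\<lambda>q. z x q + complex_of_real \<epsilon> * - h q) u - \<Phi> (z x) u) / complex_of_real \<epsilon>)" for \<epsilon>
      unfolding R_def g_def shift2[symmetric] by (simp add: divide_simps)
    ultimately have l: "(R \<longlongrightarrow> 0) (at_left 0)"
      by (simp add: filterlim_at_left_to_right[of R])
    have "(R \<longlongrightarrow> 0) (at 0)" using r l by (simp add: filterlim_split_at_real)
    hence "((\<lambda>\<epsilon>. norm (R \<epsilon>)) \<longlongrightarrow> 0) (at 0)" by (simp add: tendsto_norm_zero)
    moreover have "norm (R \<epsilon>) = norm (g (x + \<epsilon>) - g x - 0) / norm \<epsilon>" for \<epsilon>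
      by (simp add: R_def norm_divide)
    ultimately have "(g has_derivative (\<lambda>h. 0)) (at x)"
      by (simp add: has_derivative_at)
    thus ?thesis by (rule has_derivative_at_withinI)
  qed
  have "g 1 = g 0"
    by (rule has_derivative_zero_unique_strong_interval[where k="{0,1}" and a=0 and b=1 and f=g and y="g 0" and x=1, OF _ contg refl der]) auto
  moreover have "z 1 = \<zeta>2" "z 0 = \<zeta>1" by (auto simp: z_def h_def)
  ultimately have eq: "\<Phi> \<zeta>2 u = \<Phi> \<zeta>1 u" by (simp add: g_def)
  have "\<Phi> \<zeta>1 \<in> alg_carrier n" "\<Phi> \<zeta>2 \<in> alg_carrier n" using mono z1 z2 by (auto simp: monogenic_def)
  thus ?thesis using eq by (auto simp: ideal_I_def alg_carrier_def)
qed

end
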